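(* Consider the algorithm SR-DFF run with input $m$ on a stream consistent with a representation $\mathcal{G}$ of size $m$ with at most $k$ exceptions. At all times during the run, if $C[\hat x]$ is a valid and non-corrupted rule, then: (i) the conjunction $C[\hat x]$ is satisfied by every example in $G(\hat x)$; and (ii) for every feature $\phi$ in $C[\hat x]$, there is some valid example $x\in\mathcal{X}$ such that $\phi(G(\hat x),G(x))=\phi$.
   Context: Setting. $\mathcal{X}$ is a domain, $\mathcal{Y}$ a finite label set, $\Phi$ a set of binary features on $\mathcal{X}$ closed under negation. A representation of size $m$ is a cover $\mathcal{G}=\{G_1,\dots,G_m\}$ of $\mathcal{X}$ by components with labels $\ell(G)$; each $x$ has a fixed component $G(x)\ni x$; $c^*(x)=\ell(G(x))$; for components $G_i,G_j$ with different labels there is $\phi(G_i,G_j)\in\Phi$ true on all of $G_i$ and false on all of $G_j$, with $\phi(G_j,G_i)=\neg\phi(G_i,G_j)$. Protocol: the learner first gets $x_0$ with label $y_0$; then each example $x_t$ arrives, the learner predicts a label with an explanation example previously seen with that label; on a mistake the teacher gives $y_t=c^*(x_t)$ and $\phi(G(x_t),G(\hat x_t))$, $\hat x_t$ the explanation. An exception is an example on which the feedback is inconsistent with the representation/protocol; a stream is consistent with $\mathcal{G}$ with at most $k$ exceptions if at most $k$ examples are exceptions. Non-exception examples are called valid. SR-DFF (input $m$): receives $(x_0,y_0)$; maintains a list $L$ of rules, each indexed by a representative example $x$, with a conjunction $C[x]$ of features and a label $\texttt{label}[x]$. On $x_t$: if some $C[\hat x]\in L$ is satisfied by $x_t$,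 predict $\texttt{label}[\hat x]$ with explanation $\hat x$; if incorrect, receive $y_t,\phi$, set $C[\hat x]:=C[\hat x]\wedge\neg\phi$, and delete the rule if $C[\hat x]$ has at least $m$ features. Otherwise predict $y_0$ with explanation $x_0$; if incorrect, receive $y_t,\phi$ and add a new rule with empty conjunction $C[x_t]$ and $\texttt{label}[x_t]=y_t$. A rule $C[x]$ is valid if $x$ is a valid example (it is created by an exception if $x$ is an exception). A rule is corrupted if at least one of the features in its conjunction was added during a refinement step triggered by an example $x_t$ that was an exception. *)

theory Defs
  imports Main
begin

(* Features: elements of type 'f, evaluated by ev :: 'f => 'x => bool.
   A conjunction is a list of (feature, time at which it was added). *)

definition sat :: "('f \<Rightarrow> 'x \<Rightarrow> bool) \<Rightarrow> 'x \<Rightarrow> ('f \<times> nat) list \<Rightarrow> bool" where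
  "sat ev x C = (\<forall>p \<in> set C. ev (fst p) x)"

(* A rule is (t, C): representative example xs t (time index t of the example
   that created it), conjunction C; its label is ys t. *)
type_synonym 'f rule = "nat \<times> ('f \<times> nat) list"

(* Explanation used at time t: index of the first rule satisfied by xs t,
   or 0 (the initial example x_0) if none. *)
definition expl :: "('f \<Rightarrow> 'x \<Rightarrow> bool) \<Rightarrow> (nat \<Rightarrow> 'x) \<Rightarrow> nat \<Rightarrow> 'f rule list \<Rightarrow> nat" where
  "expl ev xs t L = (case find (\<lambda>r. sat ev (xs t) (snd r)) L of Some r \<Rightarrow> fst r | None \<Rightarrow> 0)"

(* One step of SR-DFF on example xs t (t >= 1); ys t is the (teacher's) label,
   phis t the feature given by the teacher on a mistake. *)
definition srdff_step ::
  "('f \<Rightarrow> 'x \<Rightarrow> bool) \<Rightarrow> ('f \<Rightarrow> 'f) \<Rightarrow> nat \<Rightarrow> (nat \<Rightarrow> 'x) \<Rightarrow> (nat \<Rightarrow> 'y) \<Rightarrow> (nat \<Rightarrow> 'f)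
   \<Rightarrow> nat \<Rightarrow> 'f rule list \<Rightarrow> 'f rule list" where
  "srdff_step ev neg m xs ys phis t L =
    (case find (\<lambda>r. sat ev (xs t) (snd r)) L of
       Some r \<Rightarrow>
         (if ys (fst r) = ys t then L
          else (let C' = (neg (phis t), t) # snd r in
                if m \<le> card (fst ` set C') then filter (\<lambda>q. fst q \<noteq> fst r) L
                else map (\<lambda>q. if fst q = fst r then (fst r, C') else q) L))
     | None \<Rightarrow> (if ys 0 = ys t then L else L @ [(t, [])]))"

(* srdff_run ... n = the rule list after processing examples x_1..x_n *)
fun srdff_run ::
  "('f \<Rightarrow> 'x \<Rightarrow> bool) \<Rightarrow> ('f \<Rightarrow> 'f) \<Rightarrow> nat \<Rightarrow> (nat \<Rightarrow> 'x) \<Rightarrow> (nat \<Rightarrow> 'y) \<Rightarrow> (nat \<Rightarrow> 'f)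
   \<Rightarrow> nat \<Rightarrow> 'f rule list" where
  "srdff_run ev neg m xs ys phis 0 = []"
| "srdff_run ev neg m xs ys phis (Suc n) =
     srdff_step ev neg m xs ys phis (Suc n) (srdff_run ev neg m xs ys phis n)"

(* Example t is an exception: the feedback is inconsistent with the representation
   (component map Gc, labels lab, separating features sep). *)
definition is_exc ::
  "('x \<Rightarrow> 'g) \<Rightarrow> ('g \<Rightarrow> 'y) \<Rightarrow> ('g \<Rightarrow> 'g \<Rightarrow> 'f) \<Rightarrow>
   ('f \<Rightarrow> 'x \<Rightarrow> bool) \<Rightarrow> ('f \<Rightarrow> 'f) \<Rightarrow> nat \<Rightarrow> (nat \<Rightarrow> 'x) \<Rightarrow> (nat \<Rightarrow> 'y) \<Rightarrow> (nat \<Rightarrow> 'f)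
   \<Rightarrow> nat \<Rightarrow> bool" where
  "is_exc Gc lab sep ev neg m xs ys phis t =
    (if t = 0 then ys 0 \<noteq> lab (Gc (xs 0))
     else (let e = expl ev xs t (srdff_run ev neg m xs ys phis (t - 1)) in
           ys t \<noteq> lab (Gc (xs t)) \<or>
           (ys e \<noteq> ys t \<and>
             \<not> (lab (Gc (xs t)) \<noteq> lab (Gc (xs e)) \<and> phis t = sep (Gc (xs t)) (Gc (xs e))))))"

end

theory Submission
  imports Defs
begin

lemma find_Some_mem: "find P L = Some r \<Longrightarrow> r \<in> set L \<and> P r"
  by (auto simp: find_Some_iff)

theorem lemma1:
  fixes ev :: "'f \<Rightarrow> 'x \<Rightarrow> bool" and neg :: "'f \<Rightarrow> 'f"
    and Gs :: "'g set" and mem :: "'g \<Rightarrow> 'x set" and Gc :: "'x \<Rightarrow> 'g"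
    and lab :: "'g \<Rightarrow> 'y::finite" and sep :: "'g \<Rightarrow> 'g \<Rightarrow> 'f"
    and m k :: nat and xs :: "nat \<Rightarrow> 'x" and ys :: "nat \<Rightarrow> 'y" and phis :: "nat \<Rightarrow> 'f"
  assumes neg: "\<forall>f x. ev (neg f) x = (\<not> ev f x)"
    and fin: "finite Gs" and size: "card Gs = m"
    and comp: "\<forall>x. Gc x \<in> Gs \<and> x \<in> mem (Gc x)"
    and sep: "\<forall>i\<in>Gs. \<forall>j\<in>Gs. lab i \<noteq> lab j \<longrightarrow>
                (\<forall>x\<in>mem i. ev (sep i j) x) \<and> (\<forall>x\<in>mem j. \<not> ev (sep i j) x)
                \<and> sep j i = neg (sep i j)"
    and exc: "finite {t. is_exc Gc lab sep ev neg m xs ys phis t}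
              \<and> card {t. is_exc Gc lab sep ev neg m xs ys phis t} \<le> k"
  shows "\<forall>n r. r \<in> set (srdff_run ev neg m xs ys phis n)
           \<and> \<not> is_exc Gc lab sep ev neg m xs ys phis (fst r)
           \<and> (\<forall>p\<in>set (snd r). \<not> is_exc Gc lab sep ev neg m xs ys phis (snd p))
           \<longrightarrow> (\<forall>x\<in>mem (Gc (xs (fst r))). sat ev x (snd r))
             \<and> (\<forall>p\<in>set (snd r). \<exists>s. \<not> is_exc Gc lab sep ev neg m xs ys phis s
                   \<and> sep (Gc (xs (fst r))) (Gc (xs s)) = fst p)"
proof -
  let ?E = "is_exc Gc lab sep ev neg m xs ys phis"
  let ?R = "srdff_run ev neg m xs ys phis"
  define P where "P r \<longleftrightarrow> (\<not> ?E (fst r) \<and> (\<forall>p\<in>set (snd r). \<not> ?E (snd p))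
           \<longrightarrow> (\<forall>x\<in>mem (Gc (xs (fst r))). sat ev x (snd r))
             \<and> (\<forall>p\<in>set (snd r). \<exists>s. \<not> ?E s
                   \<and> sep (Gc (xs (fst r))) (Gc (xs s)) = fst p))" for r
  have "\<forall>r\<in>set (?R n). P r" for n
  proof (induction n)
    case 0
    then show ?case by simp
  next
    case (Suc n)
    let ?L = "?R n"
    let ?t = "Suc n"
    show ?case
    proof (cases "find (\<lambda>r. sat ev (xs ?t) (snd r)) ?L")
      case None
      then show ?thesis using Suc.IH by (auto simp: srdff_step_def P_def sat_def)
    next
      case (Some r)
      have rL: "r \<in> set ?L" and rs: "sat ev (xs ?t) (snd r)" using find_Some_mem[OF Some] by auto
      show ?thesis
      proof (cases "ys (fst r) = ys ?t")
        case True
        then show ?thesis using Suc.IH Some by (simp add: srdff_step_def)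
      next
        case False
        define C' where "C' = (neg (phis ?t), ?t) # snd r"
        have PC': "P (fst r, C')"
          unfolding P_def
        proof (intro impI)
          assume H: "\<not> ?E (fst (fst r, C')) \<and> (\<forall>p\<in>set (snd (fst r, C')). \<not> ?E (snd p))"
          have Pr: "P r" using Suc.IH rL by blast
          have H1: "\<not> ?E (fst r)" using H by simp
          have H2: "\<forall>p\<in>set (snd r). \<not> ?E (snd p)" using H by (simp add: C'_def)
          have H3: "\<not> ?E ?t" using H by (simp add: C'_def)
          have ex: "expl ev xs ?t ?L = fst r" using Some by (simp add: expl_def)
          from H3 False ex have v: "lab (Gc (xs ?t)) \<noteq> lab (Gc (xs (fst r)))"
              "phis ?t = sep (Gc (xs ?t)) (Gc (xs (fst r)))"
            by (auto simp: is_exc_def Let_def)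
          let ?i = "Gc (xs ?t)" and ?j = "Gc (xs (fst r))"
          have inG: "?i \<in> Gs" "?j \<in> Gs" using comp by auto
          have s: "(\<forall>x\<in>mem ?i. ev (sep ?i ?j) x) \<and> (\<forall>x\<in>mem ?j. \<not> ev (sep ?i ?j) x)
                \<and> sep ?j ?i = neg (sep ?i ?j)" using sep inG v(1) by blast
          have c1: "\<forall>x\<in>mem ?j. ev (neg (phis ?t)) x" using s v(2) neg by simp
          have c2: "sep ?j ?i = neg (phis ?t)" using s v(2) by simp
          from Pr H1 H2 have old: "(\<forall>x\<in>mem ?j. sat ev x (snd r))
             \<and> (\<forall>p\<in>set (snd r). \<exists>s. \<not> ?E s \<and> sep ?j (Gc (xs s)) = fst p)"
            unfolding P_def by blast
          show "(\<forall>x\<in>mem (Gc (xs (fst (fst r, C')))). sat ev x (snd (fst r, C')))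
             \<and> (\<forall>p\<in>set (snd (fst r, C')). \<exists>s. \<not> ?E s
                   \<and> sep (Gc (xs (fst (fst r, C')))) (Gc (xs s)) = fst p)"
            using old c1 c2 H3 by (auto simp: C'_def sat_def)
        qed
        show ?thesis
        proof (cases "m \<le> card (fst ` set C')")
          case True
          then show ?thesis using Suc.IH Some False by (simp add: srdff_step_def C'_def[symmetric] Let_def)
        next
          case F2: False
          have "srdff_run ev neg m xs ys phis ?t = map (\<lambda>q. if fst q = fst r then (fst r, C') else q) ?L"
            using Some False F2 by (simp add: srdff_step_def C'_def[symmetric] Let_def)
          then show ?thesis using Suc.IH PC' by auto
        qed
      qed
    qed
  qed
  then show ?thesis unfolding P_def by blast
qed

end
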